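(* Let $L\subset\mathbb{R}^{2n}$ be a Lagrangian submanifold and let $\Delta\subset TL$ be the set of critical points of the map $\Psi:TL\to\mathbb{R}^{2n}$, $\Psi(X,W)=X+W$. Suppose there exists $X\in L$ with $\Delta\cap T_XL=\{0\}$. Then $\dim L\in\{1,2\}$.
   Context: $\mathbb{R}^{2n}$ carries its standard symplectic structure; $TL$ is the tangent bundle of $L$, viewed with $T_XL\subset\mathbb{R}^{2n}$, and $0$ denotes the zero vector of $T_XL$. *)

theory Defs
  imports "HOL-Analysis.Analysis"
begin

coinductive smooth_on :: "'a::real_normed_vector set \<Rightarrow> ('a \<Rightarrow> 'b::real_normed_vector) \<Rightarrow> bool"
  where "\<lbrakk>\<forall>x\<in>S. f differentiable (at x);
          \<forall>v. smooth_on S (\<lambda>x. frechet_derivative f (at x) v)\<rbrakk> \<Longrightarrow> smooth_on S f"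

definition omega :: "((real^'n) \<times> (real^'n)) \<Rightarrow> ((real^'n) \<times> (real^'n)) \<Rightarrow> real" where
  "omega p q = fst p \<bullet> snd q - snd p \<bullet> fst q"

definition local_param :: "('k::euclidean_space \<Rightarrow> 'a::euclidean_space) \<Rightarrow> 'k set \<Rightarrow> 'a set \<Rightarrow> bool" where
  "local_param \<phi> V L \<longleftrightarrow> open V \<and> smooth_on V \<phi> \<and> inj_on \<phi> V
     \<and> (\<forall>u\<in>V. inj (frechet_derivative \<phi> (at u)))
     \<and> (\<exists>U. open U \<and> \<phi> ` V = L \<inter> U)
     \<and> continuous_on (\<phi> ` V) (inv_into V \<phi>)"

definition submanifold_dim :: "'k::euclidean_space itself \<Rightarrow> 'a::euclidean_space set \<Rightarrow> bool" where
  "submanifold_dim _ L \<longleftrightarrow>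
     (\<forall>p\<in>L. \<exists>(\<phi>::'k \<Rightarrow> 'a) V u. local_param \<phi> V L \<and> u \<in> V \<and> \<phi> u = p)"

definition tangent_space :: "'k::euclidean_space itself \<Rightarrow> 'a::euclidean_space set \<Rightarrow> 'a \<Rightarrow> 'a set" where
  "tangent_space _ L X = {w. \<exists>(\<phi>::'k \<Rightarrow> 'a) V u. local_param \<phi> V L \<and> u \<in> V \<and> \<phi> u = X
        \<and> w \<in> range (frechet_derivative \<phi> (at u))}"

definition lagrangian :: "((real^'n) \<times> (real^'n)) set \<Rightarrow> bool" where
  "lagrangian L \<longleftrightarrow> submanifold_dim TYPE(real^'n) L \<and>
     (\<forall>X\<in>L. \<forall>v\<in>tangent_space TYPE(real^'n) L X. \<forall>w\<in>tangent_space TYPE(real^'n) L X. omega v w = 0)"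

(* (X,W) \<in> TL is a critical point of Psi(X,W) = X + W: in the induced chart
   (u,a) \<mapsto> (phi u, Dphi(u) a) of TL, the derivative of Psi is not surjective *)
definition Psi_critical :: "((real^'n) \<times> (real^'n)) set \<Rightarrow> ((real^'n) \<times> (real^'n)) \<Rightarrow> ((real^'n) \<times> (real^'n)) \<Rightarrow> bool" where
  "Psi_critical L X W \<longleftrightarrow> X \<in> L \<and> W \<in> tangent_space TYPE(real^'n) L X \<and>
     (\<exists>(\<phi>::real^'n \<Rightarrow> (real^'n) \<times> (real^'n)) V u a. local_param \<phi> V L \<and> u \<in> V \<and> \<phi> u = X
        \<and> frechet_derivative \<phi> (at u) a = W
        \<and> \<not> surj (frechet_derivative (\<lambda>(u', a'). \<phi> u' + frechet_derivative \<phi> (at u') a') (at (u, a))))"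

end

theory Submission
  imports Defs "HOL-Analysis.Analysis" "HOL-Homology.Invariance_of_Domain"
begin

lemma comm_div_alg_dim:
  fixes m :: "'a::euclidean_space \<Rightarrow> 'a \<Rightarrow> 'a"
  assumes lin1: "\<And>y. linear (\<lambda>x. m x y)"
    and comm: "\<And>x y. m x y = m y x"
    and nz: "\<And>x y. x \<noteq> 0 \<Longrightarrow> y \<noteq> 0 \<Longrightarrow> m x y \<noteq> 0"
    and cont: "continuous_on UNIV (\<lambda>x. m x x)"
    and dim: "3 \<le> DIM('a)"
  shows False
proof -
  define q where "q x = m x x" for x
  have lin2: "linear (m x)" for x
  proof -
    have "m x = (\<lambda>y. m y x)" by (rule ext) (simp add: comm)
    then show ?thesis using lin1[of x] by simp
  qed
  have mdiff: "q x - q y = m (x - y) (x + y)" for x y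
    by (simp add: q_def linear_diff[OF lin1] linear_add[OF lin2] comm[of y x])
  have qneg: "q (- x) = q x" for x
    by (simp add: q_def linear_neg[OF lin1] linear_neg[OF lin2])
  have qscale: "q (c *\<^sub>R x) = (c * c) *\<^sub>R q x" for c x
    by (simp add: q_def linear_scale[OF lin1] linear_scale[OF lin2])
  have qnz: "x \<noteq> 0 \<Longrightarrow> q x \<noteq> 0" for x using nz by (simp add: q_def)
  have qeq: "q x = q y \<Longrightarrow> y = x \<or> y = - x" for x y
  proof -
    assume "q x = q y"
    then have "m (x - y) (x + y) = 0" using mdiff[of x y] by simp
    then have "x - y = 0 \<or> x + y = 0" using nz by blast
    then show ?thesis by (auto simp: algebra_simps eq_neg_iff_add_eq_0)
  qed
  have contq: "continuous_on S q" for S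
    using cont unfolding q_def by (rule continuous_on_subset) simp
  define Z :: "'a set" where "Z = - {0}"
  define H where "H x0 = {x. x \<bullet> x0 > 0}" for x0 :: 'a
  have openH: "open (H x0)" for x0
    unfolding H_def by (intro open_Collect_less continuous_intros)
  have injH: "inj_on q (H x0)" for x0
  proof (rule inj_onI)
    fix x y assume xy: "x \<in> H x0" "y \<in> H x0" "q x = q y"
    then have "y = x \<or> y = - x" using qeq by blast
    moreover have "y \<noteq> - x" using xy(1,2) by (auto simp: H_def)
    ultimately show "x = y" by auto
  qed
  have HZ: "H x0 \<subseteq> Z" for x0 by (auto simp: H_def Z_def)
  have oqH: "open (q ` H x0)" for x0
    by (rule invariance_of_domain[OF contq openH injH])
  have homH: "\<exists>g. homeomorphism (H x0) (q ` H x0) q g" for x0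
    using invariance_of_domain_homeomorphism[OF openH contq order_refl injH] by metis
  have Hneg: "H (- x0) = uminus ` H x0" for x0
    by (auto simp: H_def image_iff intro!: exI[of _ "- _"])
  have qHneg: "q ` H (- x0) = q ` H x0" for x0
    unfolding Hneg image_image qneg ..
  have x0H: "x0 \<noteq> 0 \<Longrightarrow> x0 \<in> H x0" for x0 by (simp add: H_def)
  have openqZ: "open (q ` Z)"
  proof -
    have "q ` Z = (\<Union>x0\<in>Z. q ` H x0)"
      using HZ x0H by (auto simp: Z_def)
    then show ?thesis using oqH by auto
  qed
  define N where "N y = y /\<^sub>R norm y" for y :: 'a
  have Npos: "N (c *\<^sub>R y) = N y" if "c > 0" for c y
    using that by (simp add: N_def)
  define K where "K = N ` q ` sphere 0 1"
  have compK: "compact K"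
    unfolding K_def N_def
  proof (rule compact_continuous_image)
    show "compact (q ` sphere 0 1)" by (intro compact_continuous_image contq compact_sphere)
    have "0 \<notin> q ` sphere 0 1" using qnz by (metis image_iff mem_sphere_0 norm_zero zero_neq_one)
    then show "continuous_on (q ` sphere 0 1) (\<lambda>y. y /\<^sub>R norm y)"
      by (intro continuous_intros) auto
  qed
  have qZ_eq: "q ` Z = {y \<in> Z. N y \<in> K}"
  proof safe
    fix x assume "x \<in> Z"
    then show "q x \<in> Z" using qnz by (auto simp: Z_def)
  next
    fix x assume x: "x \<in> Z"
    define s where "s = x /\<^sub>R norm x"
    have ns: "norm s = 1" using x by (simp add: s_def Z_def)
    have xs: "x = norm x *\<^sub>R s" using x by (simp add: s_def Z_def)
    have "q x = (norm x * norm x) *\<^sub>R q s" by (subst xs, rule qscale)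
    then have "N (q x) = N (q s)" using x Npos[of "norm x * norm x" "q s"] by (simp add: Z_def)
    then show "N (q x) \<in> K" using ns by (auto simp: K_def)
  next
    fix y assume y: "y \<in> Z" "N y \<in> K"
    then obtain s where s: "norm s = 1" "N y = N (q s)" by (auto simp: K_def)
    have qs: "q s \<noteq> 0" using s(1) qnz by (metis norm_zero zero_neq_one)
    define c where "c = sqrt (norm y / norm (q s))"
    have "y = norm y *\<^sub>R N y" using y by (simp add: N_def Z_def)
    also have "\<dots> = (norm y / norm (q s)) *\<^sub>R q s" using s by (simp add: N_def divide_inverse)
    also have "\<dots> = (c * c) *\<^sub>R q s" unfolding c_def by simp
    also have "\<dots> = q (c *\<^sub>R s)" by (simp add: qscale)
    finally have "y = q (c *\<^sub>R s)" .
    moreover have "c *\<^sub>R s \<in> Z" using y s qs by (auto simp: Z_def c_def)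
    ultimately show "y \<in> q ` Z" by blast
  qed
  have closedqZ: "closedin (top_of_set Z) (q ` Z)"
  proof -
    have "continuous_on Z N" unfolding N_def Z_def by (intro continuous_intros) auto
    then have "closedin (top_of_set Z) (Z \<inter> N -` K)"
      using compK compact_imp_closed continuous_closedin_preimage by blast
    then show ?thesis unfolding qZ_eq by (simp add: Int_def vimage_def conj_commute)
  qed
  have connZ: "connected Z" unfolding Z_def
    by (rule connected_punctured_universe) (use dim in simp)
  have "q ` Z = Z"
  proof -
    have "openin (top_of_set Z) (q ` Z)"
      using openqZ qZ_eq by (intro open_subset) auto
    moreover have "q ` Z \<noteq> {}" unfolding Z_def
      by (metis Compl_iff empty_is_image ex_in_conv nonempty_Basis nonzero_Basis singletonD)
    ultimately show ?thesis using connZ closedqZ connected_clopen by blast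
  qed
  have cov: "covering_space Z q Z"
  proof
    show "continuous_on Z q" by (rule contq)
    show "q ` Z = Z" by fact
    fix y assume "y \<in> Z"
    then obtain x0 where x0: "x0 \<in> Z" "q x0 = y" using \<open>q ` Z = Z\<close> by force
    have x0nz: "x0 \<noteq> 0" using x0 by (simp add: Z_def)
    define T where "T = q ` H x0"
    show "\<exists>T. y \<in> T \<and> openin (top_of_set Z) T \<and>
             (\<exists>v. \<Union>v = Z \<inter> q -` T \<and> (\<forall>u \<in> v. openin (top_of_set Z) u) \<and>
             pairwise disjnt v \<and> (\<forall>u \<in> v. \<exists>g. homeomorphism u T q g))"
    proof (intro exI conjI)
      show "y \<in> T" using x0 x0H[OF x0nz] by (auto simp: T_def)
      show "openin (top_of_set Z) T"
        unfolding T_def using oqH[of x0] HZ[of x0] qnz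
        by (intro open_subset) (auto simp: Z_def H_def, metis inner_zero_left less_irrefl)
      show "\<Union>{H x0, H (- x0)} = Z \<inter> q -` T"
      proof safe
        fix x assume "x \<in> Z" "q x \<in> T"
        then obtain z where z: "z \<in> H x0" "q x = q z" by (auto simp: T_def)
        then have "x = z \<or> x = - z" using qeq by metis
        then show "x \<in> \<Union>{H x0, H (- x0)}" using z by (auto simp: H_def)
      qed (use HZ qHneg in \<open>auto simp: T_def\<close>, metis imageI qHneg)
      show "\<forall>u\<in>{H x0, H (- x0)}. openin (top_of_set Z) u"
        using openH HZ by (auto intro: open_subset)
      show "pairwise disjnt {H x0, H (- x0)}"
        by (auto simp: pairwise_def disjnt_def H_def)
      show "\<forall>u\<in>{H x0, H (- x0)}. \<exists>g. homeomorphism u T q g"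
        using homH[of x0] homH[of "- x0"] qHneg[of x0] by (auto simp: T_def)
    qed
  qed
  have scZ: "simply_connected Z" unfolding Z_def
    by (rule simply_connected_punctured_universe) (use dim in simp)
  have lpcZ: "locally path_connected Z" unfolding Z_def
    by (rule open_imp_locally_path_connected) auto
  obtain s where s: "continuous_on Z s" "s \<in> Z \<rightarrow> Z" "\<And>y. y \<in> Z \<Longrightarrow> q (s y) = y"
    using covering_space_lift[OF cov scZ lpcZ, of id] by (auto simp: continuous_on_id)
  define h where "h x = (s (q x) \<bullet> x) / (x \<bullet> x)" for x
  have hval: "h x = 1 \<or> h x = -1" if "x \<in> Z" for x
  proof -
    have "q x \<in> Z" using that qnz by (auto simp: Z_def)
    then have "q (s (q x)) = q x" using s(3) by blast
    then have "s (q x) = x \<or> s (q x) = - x" using qeq by metis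
    moreover have "x \<bullet> x \<noteq> 0" using that by (simp add: Z_def)
    ultimately show ?thesis by (auto simp: h_def)
  qed
  have hneg: "h (- x) = - h x" for x
    by (simp add: h_def qneg)
  have conth: "continuous_on Z h"
  proof -
    have "continuous_on Z (s \<circ> q)"
      using continuous_on_compose[OF contq[of Z], of s] s(1) \<open>q ` Z = Z\<close> by simp
    then show ?thesis unfolding h_def o_def Z_def
      by (intro continuous_intros) (auto simp: Z_def)
  qed
  have "connected (h ` Z)" using connZ conth by (simp add: connected_continuous_image)
  obtain b :: 'a where b: "b \<noteq> 0"
    by (metis nonempty_Basis nonzero_Basis ex_in_conv)
  have bZ: "b \<in> Z" "- b \<in> Z" using b by (auto simp: Z_def)
  have "h b \<in> h ` Z" "h (- b) \<in> h ` Z" using bZ by auto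
  moreover have "h (- b) = - h b" by (rule hneg)
  ultimately have "0 \<in> h ` Z"
    using \<open>connected (h ` Z)\<close> hval[OF bZ(1)] unfolding connected_iff_interval
    by (metis neg_0_le_iff_le zero_le_one le_minus_iff neg_le_0_iff_le)
  then show False using hval by force
qed

lemma smooth_on_D:
  assumes "smooth_on S f"
  shows "\<forall>x\<in>S. f differentiable (at x)" "\<And>v. smooth_on S (\<lambda>x. frechet_derivative f (at x) v)"
  using assms by (auto elim: smooth_on.cases)

lemma omega_linear1: "linear (\<lambda>p. omega p q)"
  by (rule linearI) (auto simp: omega_def inner_add_left algebra_simps)

lemma omega_antisym: "omega p q = - omega q p"
  by (simp add: omega_def inner_commute)

lemma has_derivative_omega:
  assumes "(f has_derivative f') (at x)" "(g has_derivative g') (at x)"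
  shows "((\<lambda>y. omega (f y) (g y)) has_derivative (\<lambda>h. omega (f' h) (g x) + omega (f x) (g' h))) (at x)"
  unfolding omega_def
  by (rule derivative_eq_intros has_derivative_fst has_derivative_snd assms | simp)+
     (auto simp: algebra_simps inner_commute)

lemma main_core:
  fixes L :: "((real^'n) \<times> (real^'n)) set"
  assumes "lagrangian L"
    and "\<exists>X\<in>L. {W \<in> tangent_space TYPE(real^'n) L X. Psi_critical L X W} = {0}"
  obtains m :: "real^'n \<Rightarrow> real^'n \<Rightarrow> real^'n" where
    "\<And>y. linear (\<lambda>x. m x y)" "\<And>x y. m x y = m y x"
    "\<And>x y. x \<noteq> 0 \<Longrightarrow> y \<noteq> 0 \<Longrightarrow> m x y \<noteq> 0" "continuous_on UNIV (\<lambda>x. m x x)"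
proof -
  obtain X where X: "X \<in> L" and crit: "{W \<in> tangent_space TYPE(real^'n) L X. Psi_critical L X W} = {0}"
    using assms(2) by blast
  have sub: "submanifold_dim TYPE(real^'n) L"
    and lag: "\<And>X v w. X \<in> L \<Longrightarrow> v \<in> tangent_space TYPE(real^'n) L X \<Longrightarrow> w \<in> tangent_space TYPE(real^'n) L X \<Longrightarrow> omega v w = 0"
    using assms(1) unfolding lagrangian_def by blast+
  obtain \<phi> :: "real^'n \<Rightarrow> (real^'n) \<times> (real^'n)" and V u where
    lp: "local_param \<phi> V L" and uV: "u \<in> V" and \<phi>u: "\<phi> u = X"
    using sub X unfolding submanifold_dim_def by blast
  have oV: "open V" and sm: "smooth_on V \<phi>" and injD: "\<And>u. u \<in> V \<Longrightarrow> inj (frechet_derivative \<phi> (at u))"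
    and imV: "\<phi> ` V \<subseteq> L"
    using lp unfolding local_param_def by auto
  define D where "D u' = frechet_derivative \<phi> (at u')" for u'
  have hdD: "(\<phi> has_derivative D u') (at u')" if "u' \<in> V" for u'
    using smooth_on_D(1)[OF sm] that unfolding D_def by (simp add: frechet_derivative_works)
  have linD: "linear (D u')" if "u' \<in> V" for u'
    using hdD[OF that] has_derivative_linear by blast
  have tang: "D u' v \<in> tangent_space TYPE(real^'n) L (\<phi> u')" if "u' \<in> V" for u' v
    unfolding tangent_space_def D_def using lp that by blast
  have lagV: "omega (D u' v) (D u' w) = 0" if "u' \<in> V" for u' v w
    using lag[OF _ tang[OF that] tang[OF that]] imV that by blast
  define e :: "'n \<Rightarrow> real^'n" where "e i = axis i 1" for i
  define g where "g i u' = D u' (e i)" for i u'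
  have smg: "smooth_on V (g i)" for i
    using smooth_on_D(2)[OF sm] unfolding g_def D_def by blast
  define Tm where "Tm i = frechet_derivative (g i) (at u)" for i
  have hdg: "(g i has_derivative Tm i) (at u)" for i
    using smooth_on_D(1)[OF smg[of i]] uV unfolding Tm_def by (simp add: frechet_derivative_works)
  have linTm: "linear (Tm i)" for i
    using hdg[of i] has_derivative_linear by blast
  have expand: "(\<Sum>i\<in>UNIV. (a $ i) *\<^sub>R e i) = a" for a :: "real^'n"
    using basis_expansion[of a] by (simp add: e_def scalar_mult_eq_scaleR)
  have Dexp: "D u' a = (\<Sum>i\<in>UNIV. (a $ i) *\<^sub>R g i u')" if "u' \<in> V" for u' a
  proof -
    have "D u' a = D u' (\<Sum>i\<in>UNIV. (a $ i) *\<^sub>R e i)" by (simp add: expand)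
    also have "\<dots> = (\<Sum>i\<in>UNIV. (a $ i) *\<^sub>R g i u')"
      using linD[OF that] by (simp add: linear_sum linear_scale g_def)
    finally show ?thesis .
  qed
  define A where "A = D u"
  define Tp where "Tp h a = (\<Sum>i\<in>UNIV. (a $ i) *\<^sub>R Tm i h)" for h a
  have hdG: "((\<lambda>u'. \<Sum>i\<in>UNIV. (a $ i) *\<^sub>R g i u') has_derivative (\<lambda>h. Tp h a)) (at u)" for a
    unfolding Tp_def by (intro has_derivative_sum has_derivative_scaleR_right hdg)
  have star: "omega (Tp h a) (A k) + omega (A a) (Tp h k) = 0" for h a k
  proof -
    have d1: "((\<lambda>y. omega (\<Sum>i\<in>UNIV. (a $ i) *\<^sub>R g i y) (\<Sum>i\<in>UNIV. (k $ i) *\<^sub>R g i y)) has_derivative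
       (\<lambda>h. omega (Tp h a) (\<Sum>i\<in>UNIV. (k $ i) *\<^sub>R g i u) + omega (\<Sum>i\<in>UNIV. (a $ i) *\<^sub>R g i u) (Tp h k))) (at u)"
      by (rule has_derivative_omega[OF hdG hdG])
    have "((\<lambda>y. omega (\<Sum>i\<in>UNIV. (a $ i) *\<^sub>R g i y) (\<Sum>i\<in>UNIV. (k $ i) *\<^sub>R g i y)) has_derivative (\<lambda>h. 0)) (at u)"
      by (rule has_derivative_transform_within_open[OF has_derivative_const oV uV])
         (simp add: lagV Dexp[symmetric])
    with d1 have "(\<lambda>h. omega (Tp h a) (\<Sum>i\<in>UNIV. (k $ i) *\<^sub>R g i u) + omega (\<Sum>i\<in>UNIV. (a $ i) *\<^sub>R g i u) (Tp h k)) = (\<lambda>h. 0)"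
      by (rule has_derivative_unique)
    then show ?thesis using Dexp[OF uV] unfolding A_def by (metis (no_types, lifting))
  qed
  have linA: "linear A" unfolding A_def by (rule linD[OF uV])
  have injA: "inj A" unfolding A_def D_def by (rule injD[OF uV])
  have linTp1: "linear (\<lambda>h. Tp h a)" for a
    by (rule linearI) (simp_all add: Tp_def linear_add[OF linTm] linear_scale[OF linTm] sum.distrib scaleR_add_right scaleR_sum_right mult.commute)
  define G where "G = (\<lambda>(u', a'). \<phi> u' + frechet_derivative \<phi> (at u') a')"
  define M where "M a = (\<lambda>(h, b). A h + Tp h a + A b)" for a
  have hdGG: "(G has_derivative M a) (at (u, a))" for a
  proof -
    have "((\<lambda>p. \<phi> (fst p) + (\<Sum>i\<in>UNIV. (snd p $ i) *\<^sub>R g i (fst p))) has_derivative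
          (\<lambda>p. A (fst p) + (\<Sum>i\<in>UNIV. (a $ i) *\<^sub>R Tm i (fst p) + (snd p $ i) *\<^sub>R g i u))) (at (u, a))"
    proof (intro has_derivative_add has_derivative_sum)
      have f1: "(fst has_derivative fst) (at (u, a))"
        by (rule bounded_linear_imp_has_derivative[OF bounded_linear_fst])
      show "((\<lambda>p. \<phi> (fst p)) has_derivative (\<lambda>p. A (fst p))) (at (u, a))"
        using has_derivative_compose[OF f1, of \<phi> "D u"] hdD[OF uV]
        unfolding A_def by (simp add: o_def)
      fix i
      have "((\<lambda>p. g i (fst p)) has_derivative (\<lambda>p. Tm i (fst p))) (at (u, a))"
        using has_derivative_compose[OF f1, of "g i" "Tm i"] hdg[of i]
        by (simp add: o_def)
      moreover have "((\<lambda>p. snd p $ i) has_derivative (\<lambda>p. snd p $ i)) (at (u, a))"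
      proof -
        have "linear (\<lambda>p::(real^'n) \<times> (real^'n). snd p $ i)" by (rule linearI) auto
        then show ?thesis by (simp add: bounded_linear_imp_has_derivative linear_conv_bounded_linear)
      qed
      ultimately show "((\<lambda>p. (snd p $ i) *\<^sub>R g i (fst p)) has_derivative
          (\<lambda>p. (a $ i) *\<^sub>R Tm i (fst p) + (snd p $ i) *\<^sub>R g i u)) (at (u, a))"
        using has_derivative_scaleR by fastforce
    qed
    moreover have "M a = (\<lambda>p. A (fst p) + (\<Sum>i\<in>UNIV. (a $ i) *\<^sub>R Tm i (fst p) + (snd p $ i) *\<^sub>R g i u))"
      using Dexp[OF uV] by (auto simp: M_def Tp_def A_def sum.distrib fun_eq_iff algebra_simps)
    ultimately have "((\<lambda>p. \<phi> (fst p) + (\<Sum>i\<in>UNIV. (snd p $ i) *\<^sub>R g i (fst p))) has_derivative M a) (at (u, a))"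
      by simp
    then show ?thesis
      by (rule has_derivative_transform_within_open[where s="V \<times> UNIV"])
         (use oV uV Dexp in \<open>auto simp: G_def D_def open_Times\<close>)
  qed
  have key: "\<exists>h. omega (Tp h a) (A k) \<noteq> 0" if "a \<noteq> 0" "k \<noteq> 0" for a k
  proof (rule ccontr)
    assume "\<not> ?thesis"
    then have z: "omega (Tp h a) (A k) = 0" for h by auto
    have "A a \<noteq> 0" using injA linA that(1) by (metis inj_on_def linear_0 UNIV_I)
    have "A a \<in> tangent_space TYPE(real^'n) L X"
      using tang[OF uV] \<phi>u unfolding A_def by metis
    then have "\<not> Psi_critical L X (A a)" using crit \<open>A a \<noteq> 0\<close> by blast
    then have "surj (frechet_derivative G (at (u, a)))"
      unfolding Psi_critical_def using X \<open>A a \<in> _\<close> lp uV \<phi>u unfolding G_def A_def D_def by blast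
    then have "surj (M a)" using frechet_derivative_at[OF hdGG] by simp
    define q where "q = A k"
    have "q \<noteq> 0" using injA linA that(2) unfolding q_def by (metis inj_on_def linear_0 UNIV_I)
    define z0 where "z0 = (snd q, - fst q)"
    obtain p where p: "M a p = z0" using \<open>surj (M a)\<close> by (metis surjD)
    obtain h b where hb: "p = (h, b)" by fastforce
    have "omega z0 q = fst q \<bullet> fst q + snd q \<bullet> snd q" by (simp add: omega_def z0_def)
    moreover have "fst q \<bullet> fst q + snd q \<bullet> snd q > 0"
      using \<open>q \<noteq> 0\<close> by (metis add_nonneg_pos add_pos_nonneg inner_gt_zero_iff inner_ge_zero prod.collapse zero_prod_def)
    moreover have "omega z0 q = 0"
    proof -
      have "omega (A h + Tp h a + A b) q = omega (A h) q + omega (Tp h a) q + omega (A b) q"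
        using linear_add[OF omega_linear1[of q]] by simp
      moreover have "A h + Tp h a + A b = z0" using p hb by (simp add: M_def)
      ultimately have "omega z0 q = omega (A h) q + omega (Tp h a) q + omega (A b) q" by simp
      then show ?thesis using z lagV[OF uV] unfolding q_def A_def by simp
    qed
    ultimately show False by simp
  qed
  have linTp2: "linear (Tp h)" for h
    by (rule linearI) (simp_all add: Tp_def sum.distrib scaleR_add_left scaleR_sum_right)
  define m where "m a k = (\<chi> i. omega (Tp (e i) a) (A k))" for a k
  show ?thesis
  proof
    show "linear (\<lambda>x. m x y)" for y
      by (rule linearI) (simp_all add: m_def vec_eq_iff linear_add[OF linTp2] linear_scale[OF linTp2]
            linear_add[OF omega_linear1] linear_scale[OF omega_linear1])
    show "m x y = m y x" for x y
    proof -
      have "omega (Tp (e i) x) (A y) = omega (Tp (e i) y) (A x)" for i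
        using star[of "e i" x y] omega_antisym[of "A x" "Tp (e i) y"] by linarith
      then show ?thesis by (simp add: m_def vec_eq_iff)
    qed
    show "m x y \<noteq> 0" if xy: "x \<noteq> 0" "y \<noteq> 0" for x y
    proof
      assume "m x y = 0"
      then have z: "omega (Tp (e i) x) (A y) = 0" for i by (simp add: m_def vec_eq_iff)
      obtain h where h: "omega (Tp h x) (A y) \<noteq> 0" using key[OF xy] by blast
      have "Tp h x = Tp (\<Sum>i\<in>UNIV. (h $ i) *\<^sub>R e i) x" by (simp add: expand)
      also have "\<dots> = (\<Sum>i\<in>UNIV. (h $ i) *\<^sub>R Tp (e i) x)"
        using linear_sum[OF linTp1[of x], of "\<lambda>i. (h $ i) *\<^sub>R e i" UNIV] linear_scale[OF linTp1[of x]] by simp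
      finally have "omega (Tp h x) (A y) = (\<Sum>i\<in>UNIV. (h $ i) * omega (Tp (e i) x) (A y))"
        using linear_sum[OF omega_linear1[of "A y"], of "\<lambda>i. (h $ i) *\<^sub>R Tp (e i) x" UNIV] linear_scale[OF omega_linear1[of "A y"]] by simp
      then show False using h z by simp
    qed
    have contA: "continuous_on UNIV A"
      using linA by (simp add: linear_continuous_on linear_conv_bounded_linear)
    have contTp: "continuous_on UNIV (Tp h)" for h
      using linTp2[of h] by (simp add: linear_continuous_on linear_conv_bounded_linear)
    show "continuous_on UNIV (\<lambda>x. m x x)"
      unfolding m_def omega_def
      by (intro continuous_on_vec_lambda continuous_intros contA contTp)
  qed
qed


theorem mainTheorem10:
  fixes L :: "((real^'n) \<times> (real^'n)) set"
  assumes "lagrangian L"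
    and "\<exists>X\<in>L. {W \<in> tangent_space TYPE(real^'n) L X. Psi_critical L X W} = {0}"
  shows "CARD('n) \<in> {1, 2}"
proof -
  obtain m :: "real^'n \<Rightarrow> real^'n \<Rightarrow> real^'n" where m:
    "\<And>y. linear (\<lambda>x. m x y)" "\<And>x y. m x y = m y x"
    "\<And>x y. x \<noteq> 0 \<Longrightarrow> y \<noteq> 0 \<Longrightarrow> m x y \<noteq> 0" "continuous_on UNIV (\<lambda>x. m x x)"
    using main_core[OF assms] by blast
  have "\<not> 3 \<le> DIM(real^'n)"
    using comm_div_alg_dim[OF m] by blast
  then have "CARD('n) < 3" by simp
  moreover have "0 < CARD('n)" by simp
  ultimately have "CARD('n) = 1 \<or> CARD('n) = 2" by linarith
  then show ?thesis by auto
qed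

end
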